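(* Let $\Bbbk$ be an algebraically closed field of characteristic zero and $n\ge 2$. Consider $A=\Bbbk[x]/(x^n)$ with the Frobenius structure determined by $\Delta(1)=\sum_{i=0}^{n-1}x^i\otimes x^{n-1-i}$ (so $\Delta(a)=(a\otimes1)\Delta(1)$) and counit $\varepsilon(x^{n-1})=1$, $\varepsilon(x^j)=0$ for $j<n-1$. Then: (a) if $n$ is even, $A$ admits no extended structure; (b) if $n$ is odd, the extended structures on $A$ are exactly $\phi=\mathrm{id}_A$ together with $\theta=\pm\sqrt n\,x^{(n-1)/2}+\sum_{j=(n+1)/2}^{n-1}\theta_jx^j$ for arbitrary $\theta_{(n+1)/2},\dots,\theta_{n-1}\in\Bbbk$.
   Context: A Frobenius algebra over $\Bbbk$ is a tuple $(A,m,u,\Delta,\varepsilon)$ where $(A,m,u)$ is an associative unital algebra and $(A,\Delta,\varepsilon)$ is a coassociative counital coalgebra satisfying $(a\otimes 1_A)\Delta(b)=\Delta(ab)=\Delta(a)(1_A\otimes b)$. A Frobenius algebra morphism is both an algebra and coalgebra morphism. An extended structure on $A$ is a pair $(\phi,\theta)$, $\phi:A\to A$ linear, $\theta\in A$, with: (i) $\phi$ a Frobenius algebra morphism with $\phi^2=\mathrm{id}_A$; (ii) $\phi(\theta a)=\theta a$ for all $a\in A$; (iii) $m(\phi\otimes\mathrm{id}_A)\Delta(1_A)=\theta^2$. *)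

theory Defs
  imports "HOL-Computational_Algebra.Polynomial"
begin

definition alg_closed :: "'a::field itself \<Rightarrow> bool" where
  "alg_closed _ = (\<forall>p::'a poly. degree p > 0 \<longrightarrow> (\<exists>x. poly p x = 0))"

text \<open>The algebra A = k[x]/(x^n): an element is its coefficient sequence
  (coefficient of x^i at position i), vanishing at positions >= n.\<close>
definition TA :: "nat \<Rightarrow> (nat \<Rightarrow> 'k::field) set" where
  "TA n = {a. \<forall>i\<ge>n. a i = 0}"

definition xpow :: "nat \<Rightarrow> nat \<Rightarrow> nat \<Rightarrow> 'k::field" where
  "xpow n k = (\<lambda>i. if i = k \<and> k < n then 1 else 0)"

definition tone :: "nat \<Rightarrow> nat \<Rightarrow> 'k::field" where
  "tone n = xpow n 0"

definition tadd :: "(nat \<Rightarrow> 'k::field) \<Rightarrow> (nat \<Rightarrow> 'k) \<Rightarrow> nat \<Rightarrow> 'k" where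
  "tadd a b = (\<lambda>i. a i + b i)"

definition tsmult :: "'k::field \<Rightarrow> (nat \<Rightarrow> 'k) \<Rightarrow> nat \<Rightarrow> 'k" where
  "tsmult c a = (\<lambda>i. c * a i)"

definition tmult :: "nat \<Rightarrow> (nat \<Rightarrow> 'k::field) \<Rightarrow> (nat \<Rightarrow> 'k) \<Rightarrow> nat \<Rightarrow> 'k" where
  "tmult n a b = (\<lambda>k. if k < n then (\<Sum>i\<le>k. a i * b (k - i)) else 0)"

text \<open>Tensors in A \<otimes> A: coefficient of x^p \<otimes> x^q at (p,q).\<close>
definition delta1 :: "nat \<Rightarrow> nat \<Rightarrow> nat \<Rightarrow> 'k::field" where
  "delta1 n = (\<lambda>p q. if p < n \<and> q < n \<and> p + q = n - 1 then 1 else 0)"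

text \<open>Left action (a \<otimes> 1) T.\<close>
definition lact :: "nat \<Rightarrow> (nat \<Rightarrow> 'k::field) \<Rightarrow> (nat \<Rightarrow> nat \<Rightarrow> 'k) \<Rightarrow> nat \<Rightarrow> nat \<Rightarrow> 'k" where
  "lact n a T = (\<lambda>p q. if p < n then (\<Sum>r\<le>p. a r * T (p - r) q) else 0)"

definition comult :: "nat \<Rightarrow> (nat \<Rightarrow> 'k::field) \<Rightarrow> nat \<Rightarrow> nat \<Rightarrow> 'k" where
  "comult n a = lact n a (delta1 n)"

definition counit :: "nat \<Rightarrow> (nat \<Rightarrow> 'k::field) \<Rightarrow> 'k" where
  "counit n a = a (n - 1)"

text \<open>f \<otimes> g applied to a tensor (for linear f, g), expanded on the monomial basis.\<close>
definition tensor_map :: "nat \<Rightarrow> ((nat \<Rightarrow> 'k::field) \<Rightarrow> nat \<Rightarrow> 'k) \<Rightarrow> ((nat \<Rightarrow> 'k) \<Rightarrow> nat \<Rightarrow> 'k)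
    \<Rightarrow> (nat \<Rightarrow> nat \<Rightarrow> 'k) \<Rightarrow> nat \<Rightarrow> nat \<Rightarrow> 'k" where
  "tensor_map n f g T = (\<lambda>p q. \<Sum>i<n. \<Sum>j<n. T i j * f (xpow n i) p * g (xpow n j) q)"

definition tensor_mult :: "nat \<Rightarrow> (nat \<Rightarrow> nat \<Rightarrow> 'k::field) \<Rightarrow> nat \<Rightarrow> 'k" where
  "tensor_mult n T = (\<lambda>k. \<Sum>i<n. \<Sum>j<n. T i j * tmult n (xpow n i) (xpow n j) k)"

definition is_linear_map :: "nat \<Rightarrow> ((nat \<Rightarrow> 'k::field) \<Rightarrow> nat \<Rightarrow> 'k) \<Rightarrow> bool" where
  "is_linear_map n f \<longleftrightarrow> (\<forall>a\<in>TA n. f a \<in> TA n)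
     \<and> (\<forall>a\<in>TA n. \<forall>b\<in>TA n. f (tadd a b) = tadd (f a) (f b))
     \<and> (\<forall>c. \<forall>a\<in>TA n. f (tsmult c a) = tsmult c (f a))"

definition frob_morphism :: "nat \<Rightarrow> ((nat \<Rightarrow> 'k::field) \<Rightarrow> nat \<Rightarrow> 'k) \<Rightarrow> bool" where
  "frob_morphism n f \<longleftrightarrow> is_linear_map n f
     \<and> f (tone n) = tone n
     \<and> (\<forall>a\<in>TA n. \<forall>b\<in>TA n. f (tmult n a b) = tmult n (f a) (f b))
     \<and> (\<forall>a\<in>TA n. comult n (f a) = tensor_map n f f (comult n a))
     \<and> (\<forall>a\<in>TA n. counit n (f a) = counit n a)"

definition extended_structure :: "nat \<Rightarrow> ((nat \<Rightarrow> 'k::field) \<Rightarrow> nat \<Rightarrow> 'k) \<Rightarrow> (nat \<Rightarrow> 'k) \<Rightarrow> bool" where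
  "extended_structure n \<phi> \<theta> \<longleftrightarrow> \<theta> \<in> TA n
     \<and> frob_morphism n \<phi>
     \<and> (\<forall>a\<in>TA n. \<phi> (\<phi> a) = a)
     \<and> (\<forall>a\<in>TA n. \<phi> (tmult n \<theta> a) = tmult n \<theta> a)
     \<and> tensor_mult n (tensor_map n \<phi> id (delta1 n)) = tmult n \<theta> \<theta>"

end

theory Submission
  imports Defs
begin

lemma xpow_TA: "xpow n k \<in> TA n"
  by (auto simp: TA_def xpow_def)

lemma tone_TA: "tone n \<in> TA n" by (simp add: tone_def xpow_TA)

lemma tmult_TA: "tmult n a b \<in> TA n" by (simp add: TA_def tmult_def)

lemma sum_single:
  assumes "finite A" "\<And>x. x \<in> A \<Longrightarrow> x \<noteq> a \<Longrightarrow> g x = 0"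
  shows "sum g A = (if a \<in> A then g a else 0)"
proof -
  have "sum g A = (\<Sum>x\<in>A. if x = a then g a else 0)" using assms(2) by (intro sum.cong) auto
  then show ?thesis using assms(1) by simp
qed

lemma tmult_xpow: "tmult n (xpow n i) (xpow n j) = xpow n (i+j)"
proof
  fix k
  show "tmult n (xpow n i) (xpow n j) k = xpow n (i+j) k"
    unfolding tmult_def
    apply (subst sum_single[where a=i])
    apply (auto simp: xpow_def)
    done
qed

lemma tmult_low:
  assumes "\<forall>i<p. a i = 0" "\<forall>i<q. b i = 0" "l < p + q"
  shows "tmult n a b l = 0"
proof -
  have h: "a i * b (l - i) = 0" if "i \<le> l" for i
  proof (cases "i < p")
    case True then show ?thesis using assms by simp
  next
    case False then have "l - i < q" using assms(3) that by linarith
    then show ?thesis using assms by simp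
  qed
  have "(\<Sum>i\<le>l. a i * b (l - i)) = 0" by (rule sum.neutral) (use h in auto)
  then show ?thesis unfolding tmult_def by simp
qed

lemma tmult_lead:
  assumes "\<forall>i<p. a i = 0" "\<forall>i<q. b i = 0" "p + q < n"
  shows "tmult n a b (p+q) = a p * b q"
proof -
  have "(\<Sum>i\<le>p+q. a i * b (p + q - i)) = (\<Sum>i\<le>p+q. if i = p then a p * b q else 0)"
  proof (rule sum.cong)
    fix i assume i: "i \<in> {..p+q}"
    show "a i * b (p + q - i) = (if i = p then a p * b q else 0)"
    proof (cases "i < p")
      case True then show ?thesis using assms by simp
    next
      case False
      show ?thesis
      proof (cases "i = p")
        case False
        with \<open>\<not> i < p\<close> have "p + q - i < q" using i by auto
        then show ?thesis using assms False by simp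
      qed simp
    qed
  qed simp
  then show ?thesis using assms(3) by (simp add: tmult_def)
qed

lemma tmult0: "0 < n \<Longrightarrow> tmult n a b 0 = a 0 * b 0"
  by (simp add: tmult_def)

lemma tmult_one_right:
  assumes "a \<in> TA n"
  shows "tmult n a (tone n) = a"
proof
  fix k
  show "tmult n a (tone n) k = a k"
  proof (cases "k < n")
    case True
    have "(\<Sum>i\<le>k. a i * tone n (k - i)) = (\<Sum>i\<le>k. if i = k then a k else 0)"
      using True by (intro sum.cong) (auto simp: tone_def xpow_def)
    then show ?thesis using True by (simp add: tmult_def)
  next
    case False
    then show ?thesis using assms by (simp add: tmult_def TA_def)
  qed
qed

lemma fm_TA: "frob_morphism n f \<Longrightarrow> a \<in> TA n \<Longrightarrow> f a \<in> TA n"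
  by (simp add: frob_morphism_def is_linear_map_def)
lemma fm_add: "frob_morphism n f \<Longrightarrow> a \<in> TA n \<Longrightarrow> b \<in> TA n \<Longrightarrow> f (tadd a b) = tadd (f a) (f b)"
  by (simp add: frob_morphism_def is_linear_map_def)
lemma fm_smult: "frob_morphism n f \<Longrightarrow> a \<in> TA n \<Longrightarrow> f (tsmult c a) = tsmult c (f a)"
  by (simp add: frob_morphism_def is_linear_map_def)
lemma fm_one: "frob_morphism n f \<Longrightarrow> f (tone n) = tone n"
  by (simp add: frob_morphism_def)
lemma fm_mult: "frob_morphism n f \<Longrightarrow> a \<in> TA n \<Longrightarrow> b \<in> TA n \<Longrightarrow> f (tmult n a b) = tmult n (f a) (f b)"
  by (simp add: frob_morphism_def)
lemma fm_counit: "frob_morphism n f \<Longrightarrow> a \<in> TA n \<Longrightarrow> counit n (f a) = counit n a"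
  by (simp add: frob_morphism_def)

lemma zero_TA: "(\<lambda>_. 0) \<in> TA n" by (simp add: TA_def)

lemma fm_zero:
  assumes "frob_morphism n f"
  shows "f (\<lambda>_. 0) = (\<lambda>_. 0)"
proof -
  have "f (tsmult 0 (\<lambda>_. 0)) = tsmult 0 (f (\<lambda>_. 0))"
    using fm_smult[OF assms zero_TA] .
  moreover have "tsmult 0 g = (\<lambda>_. 0)" for g :: "nat \<Rightarrow> 'a" by (simp add: tsmult_def)
  ultimately show ?thesis by simp
qed

lemma xpow_n: "xpow n n = (\<lambda>_. 0)" by (simp add: xpow_def)

lemma fm_pow_succ:
  assumes "frob_morphism n f"
  shows "f (xpow n (Suc m)) = tmult n (f (xpow n 1)) (f (xpow n m))"
  by (metis fm_mult[OF assms xpow_TA xpow_TA] tmult_xpow plus_1_eq_Suc)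

lemma fm_z0:
  assumes fm: "frob_morphism n f" and n: "0 < n"
  shows "f (xpow n 1) 0 = 0"
proof -
  have "f (xpow n m) 0 = (f (xpow n 1) 0) ^ m" for m
  proof (induction m)
    case 0
    then show ?case using fm_one[OF fm] n by (simp add: tone_def xpow_def)
  next
    case (Suc m)
    then show ?case by (simp add: fm_pow_succ[OF fm, of m] tmult0[OF n])
  qed
  from this[of n] show ?thesis using fm_zero[OF fm] by (simp add: xpow_n)
qed

lemma fm_L1a:
  assumes fm: "frob_morphism n f" and n: "0 < n"
  shows "\<forall>i<m. f (xpow n m) i = 0"
proof (induction m)
  case 0
  then show ?case by simp
next
  case (Suc m)
  have z: "\<forall>i<1. f (xpow n 1) i = 0" using fm_z0[OF fm n] by simp
  show ?case using fm_pow_succ[OF fm, of m] tmult_low[OF z Suc.IH] by simp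
qed

lemma fm_L1b:
  assumes fm: "frob_morphism n f" and n: "0 < n"
  shows "m < n \<Longrightarrow> f (xpow n m) m = (f (xpow n 1) 1) ^ m"
proof (induction m)
  case 0
  then show ?case using fm_one[OF fm] n by (simp add: tone_def xpow_def)
next
  case (Suc m)
  have z: "\<forall>i<1. f (xpow n 1) i = 0" using fm_z0[OF fm n] by simp
  have "tmult n (f (xpow n 1)) (f (xpow n m)) (1 + m) = f (xpow n 1) 1 * f (xpow n m) m"
    using tmult_lead[OF z fm_L1a[OF fm n, of m]] Suc.prems by simp
  then show ?case using fm_pow_succ[OF fm, of m] Suc by simp
qed

lemma fm_expand:
  assumes fm: "frob_morphism n f" and a: "a \<in> TA n"
  shows "f a = (\<lambda>p. \<Sum>i<n. a i * f (xpow n i) p)"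
proof -
  define tr where "tr m = (\<lambda>j. if j < m then a j else 0)" for m
  have trTA: "tr m \<in> TA n" for m using a by (auto simp: tr_def TA_def)
  have trS: "tr (Suc m) = tadd (tr m) (tsmult (a m) (xpow n m))" for m
    using a by (auto simp: tr_def tadd_def tsmult_def xpow_def TA_def fun_eq_iff less_Suc_eq)
  have "f (tr m) = (\<lambda>p. \<Sum>i<m. a i * f (xpow n i) p)" for m
  proof (induction m)
    case 0
    have "tr 0 = (\<lambda>_. 0)" by (simp add: tr_def)
    then show ?case using fm_zero[OF fm] by simp
  next
    case (Suc m)
    have sTA: "tsmult (a m) (xpow n m) \<in> TA n" by (auto simp: tsmult_def xpow_def TA_def)
    have "f (tr (Suc m)) = tadd (f (tr m)) (tsmult (a m) (f (xpow n m)))"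
      unfolding trS fm_add[OF fm trTA sTA] fm_smult[OF fm xpow_TA] ..
    then show ?case using Suc.IH by (simp add: tadd_def tsmult_def)
  qed
  moreover have "tr n = a" using a by (auto simp: tr_def TA_def fun_eq_iff)
  ultimately show ?thesis by metis
qed

lemma tmap_delta:
  assumes n: "0 < n"
  shows "tensor_map n f id (delta1 n) p q = (if q < n then f (xpow n (n - 1 - q)) p else 0)"
proof -
  have inner: "(\<Sum>j<n. delta1 n i j * f (xpow n i) p * id (xpow n j) q)
      = (if q < n \<and> i + q = n - 1 then f (xpow n i) p else 0)" for i
    apply (subst sum_single[where a=q])
    apply (auto simp: xpow_def delta1_def)
    done
  have "(\<Sum>i<n. (if q < n \<and> i + q = n - 1 then f (xpow n i) p else 0))
      = (if q < n then f (xpow n (n - 1 - q)) p else 0)"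
    apply (subst sum_single[where a="n - 1 - q"])
    using n apply auto
    done
  then show ?thesis unfolding tensor_map_def inner by simp
qed

lemma tmult_sum:
  "tensor_mult n T k = (if k < n then (\<Sum>i\<le>k. T i (k - i)) else 0)"
proof -
  have inner: "(\<Sum>j<n. T i j * tmult n (xpow n i) (xpow n j) k)
      = (if i \<in> {..k} \<and> k < n then T i (k - i) else 0)" for i
    unfolding tmult_xpow
    apply (subst sum_single[where a="k - i"])
    apply (auto simp: xpow_def)
    done
  show ?thesis
  proof (cases "k < n")
    case True
    have "(\<Sum>i<n. (if i \<in> {..k} \<and> k < n then T i (k - i) else 0))
        = (\<Sum>i<n. (if i \<in> {..k} then T i (k - i) else 0))" using True by simp
    also have "\<dots> = (\<Sum>i\<in>{..<n} \<inter> {..k}. T i (k - i))"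
      by (rule sum.inter_restrict[symmetric]) simp
    also have "{..<n} \<inter> {..k} = {..k}" using True by auto
    finally show ?thesis unfolding tensor_mult_def inner using True by simp
  next
    case False
    then show ?thesis unfolding tensor_mult_def inner by simp
  qed
qed

lemma R_formula:
  assumes a: "\<forall>m. \<forall>i<m. f (xpow n m) i = 0"
    and b: "\<forall>m<n. f (xpow n m) m = c ^ m" and n: "0 < n"
  shows "tensor_mult n (tensor_map n f id (delta1 n)) = (\<lambda>k. if k = n - 1 then (\<Sum>m<n. c ^ m) else 0)"
proof
  fix k
  show "tensor_mult n (tensor_map n f id (delta1 n)) k = (if k = n - 1 then (\<Sum>m<n. c ^ m) else 0)"
  proof (cases "k < n")
    case True
    have eq: "tensor_mult n (tensor_map n f id (delta1 n)) k = (\<Sum>i\<le>k. f (xpow n (n - 1 - (k - i))) i)"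
      unfolding tmult_sum tmap_delta[OF n] using True by (auto intro!: sum.cong)
    show ?thesis
    proof (cases "k = n - 1")
      case True
      have s1: "(\<Sum>i\<le>k. f (xpow n (n - 1 - (k - i))) i) = (\<Sum>i\<le>k. c ^ i)"
        using True b n by (intro sum.cong) auto
      have "{..k} = {..<n}" using True n by auto
      then have s2: "(\<Sum>i\<le>k. c ^ i) = (\<Sum>i<n. c ^ i)" by simp
      show ?thesis unfolding eq s1 s2 using True by simp
    next
      case False
      have "(\<Sum>i\<le>k. f (xpow n (n - 1 - (k - i))) i) = 0"
        using False \<open>k < n\<close> a by (intro sum.neutral) auto
      then show ?thesis using eq False by simp
    qed
  next
    case False
    then show ?thesis using n by (simp add: tmult_sum)
  qed
qed

lemma altsum: "(\<Sum>m<n. (-1::'a::ring_1) ^ m) = (if even n then 0 else 1)"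
  by (induction n) auto

lemma forward:
  fixes \<theta> :: "nat \<Rightarrow> 'a::field_char_0"
  assumes es: "extended_structure n \<phi> \<theta>" and n2: "2 \<le> n"
  shows "odd n \<and> (\<forall>a\<in>TA n. \<phi> a = a) \<and> \<theta> ((n-1) div 2) ^ 2 = of_nat n \<and> (\<forall>j<(n-1) div 2. \<theta> j = 0)"
proof -
  have thTA: "\<theta> \<in> TA n" and fm: "frob_morphism n \<phi>" and inv: "\<forall>a\<in>TA n. \<phi> (\<phi> a) = a"
    and fx: "\<forall>a\<in>TA n. \<phi> (tmult n \<theta> a) = tmult n \<theta> a"
    and eq3: "tensor_mult n (tensor_map n \<phi> id (delta1 n)) = tmult n \<theta> \<theta>"
    using es unfolding extended_structure_def by auto
  have n0: "0 < n" using n2 by simp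
  define z where "z = \<phi> (xpow n 1)"
  define c where "c = z 1"
  have zTA: "z \<in> TA n" unfolding z_def by (rule fm_TA[OF fm xpow_TA])
  have z0: "z 0 = 0" unfolding z_def by (rule fm_z0[OF fm n0])
  have L1a: "\<forall>m. \<forall>i<m. \<phi> (xpow n m) i = 0" using fm_L1a[OF fm n0] by blast
  have L1b: "\<forall>m<n. \<phi> (xpow n m) m = c ^ m" using fm_L1b[OF fm n0] unfolding c_def z_def by blast
  define s where "s = (\<Sum>m<n. c ^ m)"
  have TT: "tmult n \<theta> \<theta> = (\<lambda>k. if k = n - 1 then s else 0)"
    using R_formula[OF L1a L1b n0] eq3 unfolding s_def by simp
  have phz: "\<phi> z = xpow n 1" unfolding z_def using inv xpow_TA by blast
  then have "\<phi> z 1 = 1" using n2 by (simp add: xpow_def)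
  moreover have "\<phi> z 1 = c * c"
  proof -
    have "\<phi> z 1 = (\<Sum>i<n. z i * \<phi> (xpow n i) 1)" using fm_expand[OF fm zTA] by simp
    also have "\<dots> = (if 1 \<in> {..<n} then z 1 * \<phi> (xpow n 1) 1 else 0)"
    proof (rule sum_single)
      fix i assume "i \<in> {..<n}" "i \<noteq> 1"
      then consider "i = 0" | "1 < i" by linarith
      then show "z i * \<phi> (xpow n i) 1 = 0"
        by cases (use z0 L1a in auto)
    qed simp
    also have "\<dots> = c * c" using n2 unfolding c_def z_def by simp
    finally show ?thesis .
  qed
  ultimately have cc: "c * c = 1" by simp
  have cn: "c ^ (n - 1) = 1"
  proof -
    have "counit n (\<phi> (xpow n (n-1))) = counit n (xpow n (n-1))" using fm_counit[OF fm xpow_TA] .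
    then show ?thesis using L1b n0 by (simp add: counit_def xpow_def)
  qed
  have s0: "s \<noteq> 0"
  proof -
    from cc have "c = 1 \<or> c = -1" by (simp add: square_eq_1_iff)
    then show ?thesis
    proof
      assume "c = 1" then show ?thesis using n0 by (simp add: s_def)
    next
      assume c: "c = -1"
      have "even (n - 1)"
      proof (rule ccontr)
        assume "odd (n - 1)"
        then have "c ^ (n - 1) = -1" using c by simp
        with cn show False by simp
      qed
      then have "odd n" using n0 by (cases n) auto
      then show ?thesis using c altsum[of n, where 'a='a] by (simp add: s_def)
    qed
  qed
  have low: "2 * j < n - 1 \<longrightarrow> \<theta> j = 0" for j
  proof (induction j rule: less_induct)
    case (less j)
    show ?case
    proof
      assume j: "2 * j < n - 1"
      have "\<forall>i<j. \<theta> i = 0" using less j by auto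
      then have "tmult n \<theta> \<theta> (j + j) = \<theta> j * \<theta> j" using j by (intro tmult_lead) auto
      moreover have "tmult n \<theta> \<theta> (j + j) = 0" using TT j by simp
      ultimately show "\<theta> j = 0" by simp
    qed
  qed
  have odd: "odd n"
  proof (rule ccontr)
    assume "\<not> odd n"
    then obtain m where m: "n = 2 * m" by (auto elim: evenE)
    have h: "\<forall>i<m. \<theta> i = 0" using low m by auto
    have "tmult n \<theta> \<theta> (n - 1) = 0" using m n0 by (intro tmult_low[OF h h]) auto
    moreover have "tmult n \<theta> \<theta> (n - 1) = s" using TT by simp
    ultimately show False using s0 by simp
  qed
  define k where "k = (n - 1) div 2"
  have kk: "k + k = n - 1" using odd unfolding k_def by (elim oddE) simp
  have thlow: "\<forall>j<k. \<theta> j = 0" using low kk by auto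
  have "tmult n \<theta> \<theta> (k + k) = \<theta> k * \<theta> k" using kk n0 by (intro tmult_lead[OF thlow thlow]) auto
  then have thk: "\<theta> k * \<theta> k = s" using TT kk by simp
  have "n \<noteq> 2" using odd by auto
  then have k1: "k + 1 < n" using kk n2 by linarith
  have phth: "\<phi> \<theta> = \<theta>" using fx tone_TA tmult_one_right[OF thTA] by metis
  have c1: "c = 1"
  proof -
    have "\<phi> (tmult n \<theta> (xpow n 1)) = tmult n \<theta> (xpow n 1)" using fx xpow_TA by blast
    then have "tmult n \<theta> z = tmult n \<theta> (xpow n 1)" unfolding fm_mult[OF fm thTA xpow_TA] phth z_def .
    then have "tmult n \<theta> z (k+1) = tmult n \<theta> (xpow n 1) (k+1)" by simp
    moreover have "tmult n \<theta> z (k+1) = \<theta> k * z 1"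
      using z0 k1 by (intro tmult_lead[OF thlow]) auto
    moreover have "tmult n \<theta> (xpow n 1) (k+1) = \<theta> k * xpow n 1 1"
      using k1 by (intro tmult_lead[OF thlow]) (auto simp: xpow_def)
    moreover have "xpow n 1 1 = (1::'a)" using n2 by (simp add: xpow_def)
    moreover have "\<theta> k \<noteq> 0" using thk s0 by auto
    ultimately show ?thesis unfolding c_def by simp
  qed
  have sn: "s = of_nat n" using c1 by (simp add: s_def)
  have zx: "z = xpow n 1"
  proof (rule ccontr)
    assume ne: "z \<noteq> xpow n 1"
    then have ex: "\<exists>m. z m \<noteq> xpow n 1 m" by auto
    define m where "m = (LEAST m. z m \<noteq> xpow n 1 m)"
    have mne: "z m \<noteq> xpow n 1 m" unfolding m_def by (rule LeastI_ex) (fact ex)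
    have below: "\<forall>l<m. z l = xpow n 1 l" unfolding m_def using not_less_Least by blast
    have m2: "2 \<le> m"
    proof (rule ccontr)
      assume "\<not> 2 \<le> m"
      then consider "m = 0" | "m = 1" by linarith
      then show False
        by cases (use mne z0 c1 n2 in \<open>auto simp: xpow_def c_def\<close>)
    qed
    have mn: "m < n"
    proof (rule ccontr)
      assume "\<not> m < n"
      then show False using mne zTA n2 by (auto simp: xpow_def TA_def)
    qed
    have E: "\<forall>l < m + i. \<phi> (xpow n (Suc i)) l = xpow n (Suc i) l" for i
    proof (induction i)
      case 0 show ?case using below unfolding z_def by simp
    next
      case (Suc i)
      show ?case
      proof (intro allI impI)
        fix l assume l: "l < m + Suc i"
        show "\<phi> (xpow n (Suc (Suc i))) l = xpow n (Suc (Suc i)) l"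
        proof (cases "l < n")
          case False
          have "\<phi> (xpow n (Suc (Suc i))) \<in> TA n" by (rule fm_TA[OF fm xpow_TA])
          then show ?thesis using False by (auto simp: TA_def xpow_def)
        next
          case True
          have "\<phi> (xpow n (Suc (Suc i))) l = tmult n z (\<phi> (xpow n (Suc i))) l"
            unfolding z_def by (rule fun_cong[OF fm_pow_succ[OF fm, of "Suc i"]])
          also have "\<dots> = (\<Sum>j\<le>l. z j * \<phi> (xpow n (Suc i)) (l - j))" using True by (simp add: tmult_def)
          also have "\<dots> = (\<Sum>j\<le>l. xpow n 1 j * xpow n (Suc i) (l - j))"
          proof (rule sum.cong[OF refl])
            fix j assume j: "j \<in> {..l}"
            show "z j * \<phi> (xpow n (Suc i)) (l - j) = xpow n 1 j * xpow n (Suc i) (l - j)"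
            proof (cases "j < m")
              case True
              then have zj: "z j = xpow n 1 j" using below by simp
              show ?thesis
              proof (cases "j = 1")
                case True
                then have "l - j < m + i" using l j by auto
                then show ?thesis using zj Suc.IH True by simp
              next
                case False then show ?thesis using zj by (simp add: xpow_def)
              qed
            next
              case False
              then have "l - j < Suc i" using l j by auto
              then have "\<phi> (xpow n (Suc i)) (l - j) = 0" using L1a by blast
              moreover have "xpow n 1 j = (0::'a)" using False m2 by (simp add: xpow_def)
              ultimately show ?thesis by simp
            qed
          qed
          also have "\<dots> = tmult n (xpow n 1) (xpow n (Suc i)) l" using True by (simp add: tmult_def)
          also have "\<dots> = xpow n (Suc (Suc i)) l" by (simp add: tmult_xpow)
          finally show ?thesis .
        qed
      qed
    qed
    have "\<phi> z m = (\<Sum>i<n. z i * \<phi> (xpow n i) m)" using fm_expand[OF fm zTA] by simp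
    also have "\<dots> = (\<Sum>i<n. (if i = 1 then z m else 0) + (if i = m then z m else 0))"
    proof (rule sum.cong[OF refl])
      fix i assume i: "i \<in> {..<n}"
      consider "i = 0" | "i = 1" | "2 \<le> i" by linarith
      then show "z i * \<phi> (xpow n i) m = (if i = 1 then z m else 0) + (if i = m then z m else 0)"
      proof cases
        case 1 then show ?thesis using z0 m2 by simp
      next
        case 2 then show ?thesis using c1 m2 unfolding c_def z_def by simp
      next
        case 3
        then obtain i' where i': "i = Suc i'" "1 \<le> i'" by (cases i) auto
        then have "\<phi> (xpow n i) m = xpow n i m" using E[of i'] by auto
        then show ?thesis using 3 i by (auto simp: xpow_def)
      qed
    qed
    also have "\<dots> = z m + z m" using mn m2 by (simp add: sum.distrib)
    finally have "\<phi> z m = z m + z m" .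
    moreover have "\<phi> z m = 0" using phz m2 by (simp add: xpow_def)
    ultimately have "2 * z m = 0" by simp
    then have "z m = 0" by simp
    moreover have "xpow n 1 m = (0::'a)" using m2 by (simp add: xpow_def)
    ultimately show False using mne by simp
  qed
  have phx: "\<phi> (xpow n i) = xpow n i" for i
  proof (induction i)
    case 0 then show ?case using fm_one[OF fm] by (simp add: tone_def)
  next
    case (Suc i) then show ?case
      using fm_pow_succ[OF fm, of i] zx tmult_xpow[of n 1 i] unfolding z_def by simp
  qed
  have phid: "\<forall>a\<in>TA n. \<phi> a = a"
  proof
    fix a :: "nat \<Rightarrow> 'a" assume a: "a \<in> TA n"
    show "\<phi> a = a"
    proof
      fix p
      have "\<phi> a p = (\<Sum>i<n. a i * xpow n i p)" using fm_expand[OF fm a] phx by simp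
      also have "\<dots> = (if p \<in> {..<n} then a p * xpow n p p else 0)"
        by (rule sum_single) (auto simp: xpow_def)
      also have "\<dots> = a p" using a by (auto simp: xpow_def TA_def)
      finally show "\<phi> a p = a p" .
    qed
  qed
  show ?thesis using odd phid thk sn thlow unfolding k_def by (simp add: power2_eq_square)
qed

lemma converse:
  fixes \<theta> :: "nat \<Rightarrow> 'a::field_char_0"
  assumes odd: "odd n" and n2: "2 \<le> n" and phid: "\<forall>a\<in>TA n. \<phi> a = a" and thTA: "\<theta> \<in> TA n"
    and thk: "\<theta> ((n-1) div 2) ^ 2 = of_nat n" and thlow: "\<forall>j<(n-1) div 2. \<theta> j = 0"
  shows "extended_structure n \<phi> \<theta>"
proof -
  have n0: "0 < n" using n2 by simp
  have phx: "\<phi> (xpow n i) = xpow n i" for i using phid xpow_TA by blast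
  have taddTA: "tadd a b \<in> TA n" if "a \<in> TA n" "b \<in> TA n" for a b :: "nat \<Rightarrow> 'a"
    using that by (simp add: TA_def tadd_def)
  have tsTA: "tsmult c a \<in> TA n" if "a \<in> TA n" for a :: "nat \<Rightarrow> 'a" and c
    using that by (simp add: TA_def tsmult_def)
  have lin: "is_linear_map n \<phi>" using phid taddTA tsTA unfolding is_linear_map_def by simp
  have tmap: "tensor_map n \<phi> \<phi> T = T" if T: "\<forall>p q. (n \<le> p \<or> n \<le> q) \<longrightarrow> T p q = 0" for T
  proof (intro ext)
    fix p q
    have inner: "(\<Sum>j<n. T i j * \<phi> (xpow n i) p * \<phi> (xpow n j) q)
        = (if i = p \<and> p < n \<and> q < n then T p q else 0)" for i
      unfolding phx
      apply (subst sum_single[where a=q])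
        apply (auto simp: xpow_def)
      done
    have "tensor_map n \<phi> \<phi> T p q = (\<Sum>i<n. (if i = p \<and> p < n \<and> q < n then T p q else 0))"
      unfolding tensor_map_def inner ..
    also have "\<dots> = (if p < n \<and> q < n then T p q else 0)"
      by (subst sum_single[where a=p]) auto
    also have "\<dots> = T p q" using T by auto
    finally show "tensor_map n \<phi> \<phi> T p q = T p q" .
  qed
  have comsupp: "\<forall>p q. (n \<le> p \<or> n \<le> q) \<longrightarrow> comult n a p q = 0" for a :: "nat \<Rightarrow> 'a"
    by (auto simp: comult_def lact_def delta1_def)
  have fm: "frob_morphism n \<phi>"
    unfolding frob_morphism_def
  proof (intro conjI ballI)
    show "is_linear_map n \<phi>" by (rule lin)
    show "\<phi> (tone n) = tone n" using phid tone_TA by blast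
  next
    fix a b :: "nat \<Rightarrow> 'a" assume "a \<in> TA n" "b \<in> TA n"
    then show "\<phi> (tmult n a b) = tmult n (\<phi> a) (\<phi> b)" using phid[rule_format, OF tmult_TA, of a b] phid by simp
  next
    fix a :: "nat \<Rightarrow> 'a" assume "a \<in> TA n"
    then show "comult n (\<phi> a) = tensor_map n \<phi> \<phi> (comult n a)" using phid tmap comsupp by simp
  next
    fix a :: "nat \<Rightarrow> 'a" assume "a \<in> TA n"
    then show "counit n (\<phi> a) = counit n a" using phid by simp
  qed
  have L1a: "\<forall>m. \<forall>i<m. \<phi> (xpow n m) i = 0" unfolding phx by (simp add: xpow_def)
  have L1b: "\<forall>m<n. \<phi> (xpow n m) m = (1::'a) ^ m" unfolding phx by (simp add: xpow_def)
  have R: "tensor_mult n (tensor_map n \<phi> id (delta1 n)) = (\<lambda>k. if k = n - 1 then of_nat n else 0)"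
  proof -
    have e: "(\<Sum>m<n. (1::'a) ^ m) = of_nat n" by simp
    show ?thesis using R_formula[OF L1a L1b n0] unfolding e .
  qed
  define k where "k = (n - 1) div 2"
  have kk: "k + k = n - 1" using odd unfolding k_def by (elim oddE) simp
  have thl: "\<forall>j<k. \<theta> j = 0" using thlow unfolding k_def .
  have TT: "tmult n \<theta> \<theta> = (\<lambda>l. if l = n - 1 then of_nat n else 0)"
  proof
    fix l
    consider "l < n - 1" | "l = n - 1" | "n \<le> l" by linarith
    then show "tmult n \<theta> \<theta> l = (if l = n - 1 then of_nat n else 0)"
    proof cases
      case 1
      then show ?thesis using kk by (simp add: tmult_low[OF thl thl])
    next
      case 2
      have "tmult n \<theta> \<theta> (k + k) = \<theta> k * \<theta> k" using kk n0 by (intro tmult_lead[OF thl thl]) auto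
      then show ?thesis using 2 kk thk unfolding k_def by (simp add: power2_eq_square)
    next
      case 3
      then show ?thesis using n0 by (simp add: tmult_def)
    qed
  qed
  show ?thesis unfolding extended_structure_def
    using thTA fm phid tmult_TA R TT by auto
qed

theorem mainTheorem4:
  fixes n :: nat
  assumes "alg_closed TYPE('k::field_char_0)" and "n \<ge> 2"
  shows "(even n \<longrightarrow> \<not> (\<exists>\<phi> (\<theta>::nat \<Rightarrow> 'k). extended_structure n \<phi> \<theta>))
       \<and> (odd n \<longrightarrow> (\<forall>\<phi> (\<theta>::nat \<Rightarrow> 'k). extended_structure n \<phi> \<theta> \<longleftrightarrow>
             ((\<forall>a\<in>TA n. \<phi> a = a) \<and> \<theta> \<in> TA n
              \<and> \<theta> ((n - 1) div 2) ^ 2 = of_nat n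
              \<and> (\<forall>j<(n - 1) div 2. \<theta> j = 0))))"
proof (intro conjI impI allI)
  assume "even n"
  then show "\<not> (\<exists>\<phi> (\<theta>::nat \<Rightarrow> 'k). extended_structure n \<phi> \<theta>)"
    using forward[OF _ assms(2)] by blast
next
  fix \<phi> and \<theta> :: "nat \<Rightarrow> 'k"
  assume odd: "odd n"
  show "extended_structure n \<phi> \<theta> \<longleftrightarrow>
             ((\<forall>a\<in>TA n. \<phi> a = a) \<and> \<theta> \<in> TA n
              \<and> \<theta> ((n - 1) div 2) ^ 2 = of_nat n
              \<and> (\<forall>j<(n - 1) div 2. \<theta> j = 0))"
  proof
    assume es: "extended_structure n \<phi> \<theta>"
    then have "\<theta> \<in> TA n" by (simp add: extended_structure_def)
    then show "(\<forall>a\<in>TA n. \<phi> a = a) \<and> \<theta> \<in> TA n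
              \<and> \<theta> ((n - 1) div 2) ^ 2 = of_nat n
              \<and> (\<forall>j<(n - 1) div 2. \<theta> j = 0)"
      using forward[OF es assms(2)] by simp
  next
    assume h: "(\<forall>a\<in>TA n. \<phi> a = a) \<and> \<theta> \<in> TA n
              \<and> \<theta> ((n - 1) div 2) ^ 2 = of_nat n
              \<and> (\<forall>j<(n - 1) div 2. \<theta> j = 0)"
    show "extended_structure n \<phi> \<theta>"
      using converse[OF odd assms(2)] h by blast
  qed
qed

end
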